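(* Let $n$ be a positive integer, $S\subseteq S_n$ a subset containing the identity, $G$ the subgroup generated by $S$, $p\ne q$ primes, and $c\in G$ an element of order $p$. Call a configuration $x\in\mathbb{Z}_q^n$ semi-homogeneous if for every $g\in G$ the coordinates $x_{g(1)},x_{gc(1)},x_{gc^2(1)},\dots,x_{gc^{p-1}(1)}$ are all equal. If $x$ is not semi-homogeneous, then there is no move $y\in\mathbb{Z}_q^n$ such that for every $\sigma\in S$ the configuration $x'+y$ is semi-homogeneous, where $x'$ is defined by $x'_{\sigma(i)}=x_i$.
   Context: Permutations in $S_n$ are composed as functions, $(gh)(i)=g(h(i))$. *)

theory Defs
  imports "HOL-Algebra.Sym_Groups" "HOL-Algebra.Multiplicative_Group" "HOL-Number_Theory.Cong"
begin

text \<open>Configurations in Z_q^n are modelled as functions nat => int, read modulo q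
  (only coordinates 1..n matter). Permutations are elements of sym_group n
  (permutations of {1..n}, composed as functions).\<close>

definition semi_homogeneous ::
  "nat \<Rightarrow> (nat \<Rightarrow> nat) set \<Rightarrow> (nat \<Rightarrow> nat) \<Rightarrow> nat \<Rightarrow> (nat \<Rightarrow> int) \<Rightarrow> bool" where
  "semi_homogeneous q G c p x \<longleftrightarrow>
     (\<forall>g\<in>G. \<forall>k<p. [x (g ((c ^^ k) 1)) = x (g 1)] (mod int q))"

end

theory Submission
  imports Defs
begin

lemma sym_pow_funpow: "c [^]\<^bsub>sym_group n\<^esub> (m::nat) = c ^^ m"
  proof (induction m)
  case 0 then show ?case by (simp add: sym_group_one)
next
  case (Suc m) then show ?case
    by (simp add: sym_group_mult funpow_Suc_right del: funpow.simps)
qed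

lemma sh_diff:
  assumes "semi_homogeneous q G c p a" "semi_homogeneous q G c p b"
  shows "semi_homogeneous q G c p (\<lambda>i. a i - b i)"
  using assms unfolding semi_homogeneous_def by (meson cong_diff)

lemma sh_add:
  assumes "semi_homogeneous q G c p a" "semi_homogeneous q G c p b"
  shows "semi_homogeneous q G c p (\<lambda>i. a i + b i)"
  using assms unfolding semi_homogeneous_def by (meson cong_add)

lemma sh_neg:
  assumes "semi_homogeneous q G c p a"
  shows "semi_homogeneous q G c p (\<lambda>i. - a i)"
  using assms unfolding semi_homogeneous_def by (meson cong_minus_minus_iff)

lemma sh_zero: "semi_homogeneous q G c p (\<lambda>i. 0)"
  unfolding semi_homogeneous_def by simp

lemma sh_comp:
  assumes "semi_homogeneous q (generate (sym_group n) S) c p a"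
    and "h \<in> generate (sym_group n) S"
  shows "semi_homogeneous q (generate (sym_group n) S) c p (\<lambda>i. a (h i))"
  unfolding semi_homogeneous_def
proof (intro ballI allI impI)
  fix g k assume g: "g \<in> generate (sym_group n) S" and k: "k < p"
  have "h \<circ> g \<in> generate (sym_group n) S"
    using generate.eng[OF assms(2) g] by (simp add: sym_group_mult)
  then show "[a (h (g ((c ^^ k) 1))) = a (h (g 1))] (mod int q)"
    using assms(1) k unfolding semi_homogeneous_def by fastforce
qed

theorem mainTheorem11:
  fixes n p q :: nat and S :: "(nat \<Rightarrow> nat) set" and c :: "nat \<Rightarrow> nat"
    and x :: "nat \<Rightarrow> int"
  assumes "n > 0"
    and "S \<subseteq> carrier (sym_group n)" and "id \<in> S"
    and "prime p" and "prime q" and "p \<noteq> q"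
    and "c \<in> generate (sym_group n) S"
    and "group.ord (sym_group n) c = p"
    and "\<not> semi_homogeneous q (generate (sym_group n) S) c p x"
  shows "\<not> (\<exists>y :: nat \<Rightarrow> int. \<forall>\<sigma>\<in>S.
            semi_homogeneous q (generate (sym_group n) S) c p (\<lambda>i. x (inv' \<sigma> i) + y i))"
proof
  let ?G = "generate (sym_group n) S"
  let ?SH = "semi_homogeneous q ?G c p"
  define D where "D h = (\<lambda>i. x (h i) - x i)" for h :: "nat \<Rightarrow> nat"
  assume "\<exists>y. \<forall>\<sigma>\<in>S. ?SH (\<lambda>i. x (inv' \<sigma> i) + y i)"
  then obtain y where y: "\<And>\<sigma>. \<sigma> \<in> S \<Longrightarrow> ?SH (\<lambda>i. x (inv' \<sigma> i) + y i)" by blast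
  have grp: "group (sym_group n)" by (rule sym_group_is_group)
  have Gc: "?G \<subseteq> carrier (sym_group n)"
    using group.generate_in_carrier[OF grp assms(2)] by blast
  have Dinv: "?SH (D (inv' \<sigma>))" if "\<sigma> \<in> S" for \<sigma>
  proof -
    have "?SH (\<lambda>i. (x (inv' \<sigma> i) + y i) - (x (inv' id i) + y i))"
      using sh_diff[OF y[OF that] y[OF assms(3)]] .
    then show ?thesis unfolding D_def by (simp add: inv_id)
  qed
  have DG: "?SH (D h)" if "h \<in> ?G" for h
    using that
  proof (induction h rule: generate.induct)
    case one
    then show ?case by (simp add: sym_group_one D_def sh_zero)
  next
    case (incl h)
    have perm: "h permutes {1..n}" using incl assms(2) sym_group_carrier by blast
    have "?SH (\<lambda>i. - D (inv' h) (h i))"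
      using sh_neg[OF sh_comp[OF Dinv[OF incl] generate.incl[OF incl]]] .
    moreover have "(\<lambda>i. - D (inv' h) (h i)) = D h"
      unfolding D_def using permutes_inverses(2)[OF perm] by auto
    ultimately show ?case by simp
  next
    case (inv h)
    have "inv\<^bsub>sym_group n\<^esub> h = inv' h"
      using inv assms(2) by auto
    then show ?case using Dinv[OF inv] by simp
  next
    case (eng h1 h2)
    have "?SH (\<lambda>i. D h1 (h2 i) + D h2 i)"
      using sh_add[OF sh_comp[OF eng.IH(1) eng.hyps(2)] eng.IH(2)] .
    moreover have "(\<lambda>i. D h1 (h2 i) + D h2 i) = D (h1 \<otimes>\<^bsub>sym_group n\<^esub> h2)"
      unfolding D_def by (auto simp: sym_group_mult)
    ultimately show ?case by simp
  qed
  have cp: "c ^^ p = id"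
    using group.pow_ord_eq_1[OF grp, of c] Gc assms(7,8)
    by (auto simp: sym_pow_funpow sym_group_one)
  have idG: "id \<in> ?G" using generate.one[of "sym_group n" S] by (simp add: sym_group_one)
  have "?SH x"
    unfolding semi_homogeneous_def
  proof (intro ballI allI impI)
    fix g k assume g: "g \<in> ?G" and k: "k < p"
    define a where "a j = x (g ((c ^^ j) 1))" for j
    have gc: "g \<circ> c \<in> ?G" using generate.eng[OF g assms(7)] by (simp add: sym_group_mult)
    have v: "?SH (\<lambda>i. D (g \<circ> c) i - D g i)" using sh_diff[OF DG[OF gc] DG[OF g]] .
    have step: "[a (Suc j) - a j = a 1 - a 0] (mod int q)" if "j < p" for j
    proof -
      have "[(\<lambda>i. D (g \<circ> c) i - D g i) (id ((c ^^ j) 1)) = (\<lambda>i. D (g \<circ> c) i - D g i) (id 1)] (mod int q)"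
        using v idG that unfolding semi_homogeneous_def by blast
      then show ?thesis unfolding a_def D_def by simp
    qed
    have lin: "[a j = a 0 + int j * (a 1 - a 0)] (mod int q)" if "j \<le> p" for j
      using that
    proof (induction j)
      case 0 then show ?case by simp
    next
      case (Suc j)
      have "[a (Suc j) = a j + (a 1 - a 0)] (mod int q)"
        using step[of j] Suc.prems
        by (metis add.commute cong_add_lcancel diff_add_cancel Suc_le_lessD)
      moreover have "[a j + (a 1 - a 0) = a 0 + int j * (a 1 - a 0) + (a 1 - a 0)] (mod int q)"
        using Suc.IH Suc.prems by (intro cong_add) auto
      moreover have "a 0 + int j * (a 1 - a 0) + (a 1 - a 0) = a 0 + int (Suc j) * (a 1 - a 0)"
        by (simp add: algebra_simps)
      ultimately show ?case by (metis cong_trans)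
    qed
    have "a p = a 0" unfolding a_def using cp by simp
    then have "[a 0 = a 0 + int p * (a 1 - a 0)] (mod int q)" using lin[of p] by simp
    then have "[int p * (a 1 - a 0) = 0] (mod int q)"
      by (metis add.right_neutral cong_add_lcancel cong_sym)
    moreover have "coprime (int p) (int q)"
      using assms(4,5,6) primes_coprime by auto
    ultimately have "[a 1 - a 0 = 0] (mod int q)"
      by (metis cong_mult_rcancel coprime_commute mult.commute mult_zero_left)
    then have "[int k * (a 1 - a 0) = 0] (mod int q)"
      by (metis cong_scalar_left mult_zero_right)
    then have "[a k = a 0] (mod int q)"
    proof -
      have "[a 0 + int k * (a 1 - a 0) = a 0 + 0] (mod int q)"
        by (rule cong_add[OF cong_refl \<open>[int k * (a 1 - a 0) = 0] (mod int q)\<close>])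
      then show ?thesis using lin[of k] k by (simp add: cong_trans)
    qed
    then show "[x (g ((c ^^ k) 1)) = x (g 1)] (mod int q)" unfolding a_def by simp
  qed
  then show False using assms(9) by simp
qed

end
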